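(* Let $k$ be a bounded positive-semidefinite kernel on a set $\mathcal X$, $f\sim\mathcal{GP}(0,k)$, and let $(x_t)_{t\ge1}$ be $\mathcal X$-valued random variables adapted to a filtration $(\mathcal F_t)_{t\ge0}$. Fix $x\in\mathcal X$ and suppose there exist $T_*\in\mathbb N$ and positive numbers $(B_T)_{T\in\mathbb N}$ such that $\sum_{t=1}^T\mathbb P(x_t=x\mid\mathcal F_{t-1})\ge B_T>0$ for all $T\ge T_*$. Let $\sigma_t^2$ be the GP posterior variance given (noisy, noise variance $\sigma_\epsilon^2>0$) observations at $x_1,\dots,x_t$. Then with probability $1$, $\sigma_t^2(x)\in\mathcal O(B_t^{-1})$, i.e. $\limsup_{t\to\infty}B_t\sigma_t^2(x)<\infty$. Moreover, if $B_t\to\infty$, then (a.s.) $\limsup_{t\to\infty}B_t\sigma_t^2(x)\le\sigma_\epsilon^2$.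
   Context: The GP posterior variance with prior covariance $k$, noise variance $\sigma_\epsilon^2$ and observation points $x_1,\dots,x_t$ is $\sigma_t^2(x)=k(x,x)-\mathbf k_t(x)^\top(\mathbf K_t+\sigma_\epsilon^2I)^{-1}\mathbf k_t(x)$, with $\mathbf k_t(x)=[k(x,x_i)]_{i=1}^t$, $\mathbf K_t=[k(x_i,x_j)]_{i,j=1}^t$. Observations are $y_i=f(x_i)+\epsilon_i$ with i.i.d. $\epsilon_i\sim\mathcal N(0,\sigma_\epsilon^2)$. *)

theory Defs
  imports "HOL-Probability.Probability" "Jordan_Normal_Form.Gauss_Jordan_Elimination"
begin

definition psd_kernel :: "('x \<Rightarrow> 'x \<Rightarrow> real) \<Rightarrow> bool" where
  "psd_kernel k \<longleftrightarrow> (\<forall>x y. k x y = k y x) \<and>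
     (\<forall>(n::nat) (xs::nat \<Rightarrow> 'x) (c::nat \<Rightarrow> real).
        (\<Sum>i<n. \<Sum>j<n. c i * c j * k (xs i) (xs j)) \<ge> 0)"

definition bounded_kernel :: "('x \<Rightarrow> 'x \<Rightarrow> real) \<Rightarrow> bool" where
  "bounded_kernel k \<longleftrightarrow> (\<exists>K. \<forall>x y. \<bar>k x y\<bar> \<le> K)"

definition gram_mat :: "('x \<Rightarrow> 'x \<Rightarrow> real) \<Rightarrow> (nat \<Rightarrow> 'x) \<Rightarrow> nat \<Rightarrow> real mat" where
  "gram_mat k xs t = mat t t (\<lambda>(i, j). k (xs i) (xs j))"

definition kern_vec :: "('x \<Rightarrow> 'x \<Rightarrow> real) \<Rightarrow> (nat \<Rightarrow> 'x) \<Rightarrow> nat \<Rightarrow> 'x \<Rightarrow> real vec" where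
  "kern_vec k xs t x = vec t (\<lambda>i. k x (xs i))"

definition post_var :: "('x \<Rightarrow> 'x \<Rightarrow> real) \<Rightarrow> real \<Rightarrow> (nat \<Rightarrow> 'x) \<Rightarrow> nat \<Rightarrow> 'x \<Rightarrow> real" where
  "post_var k s2 xs t x =
     k x x - scalar_prod (kern_vec k xs t x)
       (the (mat_inverse (gram_mat k xs t + s2 \<cdot>\<^sub>m 1\<^sub>m t)) *\<^sub>v kern_vec k xs t x)"

end

theory Submission
  imports Defs "Jordan_Normal_Form.Determinant"
begin


lemma quad_ineq:
  fixes g :: "nat \<Rightarrow> nat \<Rightarrow> real" and u b c :: "nat \<Rightarrow> real"
  assumes sym: "\<And>i j. g i j = g j i"
    and psd: "\<And>w. (\<Sum>i<t. \<Sum>j<t. w i * w j * g i j) \<ge> 0"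
    and sol: "\<And>i. i < t \<Longrightarrow> (\<Sum>j<t. g i j * u j) = b i"
  shows "(\<Sum>i<t. b i * u i) \<ge> 2 * (\<Sum>i<t. c i * b i) - (\<Sum>i<t. \<Sum>j<t. c i * c j * g i j)"
proof -
  have e1: "(\<Sum>i<t. \<Sum>j<t. u i * u j * g i j) = (\<Sum>i<t. b i * u i)"
  proof -
    have "(\<Sum>i<t. \<Sum>j<t. u i * u j * g i j) = (\<Sum>i<t. u i * (\<Sum>j<t. g i j * u j))"
      by (simp add: sum_distrib_left mult_ac)
    also have "\<dots> = (\<Sum>i<t. b i * u i)" using sol by (simp add: mult.commute)
    finally show ?thesis .
  qed
  have e2: "(\<Sum>i<t. \<Sum>j<t. c i * u j * g i j) = (\<Sum>i<t. c i * b i)"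
  proof -
    have "(\<Sum>i<t. \<Sum>j<t. c i * u j * g i j) = (\<Sum>i<t. c i * (\<Sum>j<t. g i j * u j))"
      by (simp add: sum_distrib_left mult_ac)
    also have "\<dots> = (\<Sum>i<t. c i * b i)" using sol by simp
    finally show ?thesis .
  qed
  have e3: "(\<Sum>i<t. \<Sum>j<t. u i * c j * g i j) = (\<Sum>i<t. c i * b i)"
  proof -
    have "(\<Sum>i<t. \<Sum>j<t. u i * c j * g i j) = (\<Sum>j<t. \<Sum>i<t. u i * c j * g i j)"
      by (rule sum.swap)
    also have "\<dots> = (\<Sum>j<t. \<Sum>i<t. c j * u i * g j i)" using sym by (simp add: mult_ac)
    also have "\<dots> = (\<Sum>i<t. c i * b i)" using e2 by simp
    finally show ?thesis .
  qed
  have "0 \<le> (\<Sum>i<t. \<Sum>j<t. (u i - c i) * (u j - c j) * g i j)" by (rule psd)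
  also have "\<dots> = (\<Sum>i<t. \<Sum>j<t. u i * u j * g i j) - (\<Sum>i<t. \<Sum>j<t. u i * c j * g i j)
      - (\<Sum>i<t. \<Sum>j<t. c i * u j * g i j) + (\<Sum>i<t. \<Sum>j<t. c i * c j * g i j)"
    by (simp add: algebra_simps sum.distrib sum_subtractf)
  finally show ?thesis using e1 e2 e3 by simp
qed




lemma delta_aux:
  fixes t i :: nat and f :: "nat \<Rightarrow> real"
  assumes "i < t"
  shows "(\<Sum>j<t. f j * (if i = j then s2 else 0)) = f i * s2"
proof -
  have "(\<Sum>j<t. f j * (if i = j then s2 else 0)) = (\<Sum>j<t. if i = j then f j * s2 else 0)"
    by (intro sum.cong) auto
  also have "\<dots> = f i * s2" using assms by (simp add: sum.delta')
  finally show ?thesis .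
qed

lemma psd_g:
  fixes t :: nat and xs :: "nat \<Rightarrow> 'x" and w :: "nat \<Rightarrow> real"
  shows "(\<Sum>i<t. \<Sum>j<t. w i * w j * (k (xs i) (xs j) + (if i = j then s else 0)))
     = (\<Sum>i<t. \<Sum>j<t. w i * w j * k (xs i) (xs j)) + s * (\<Sum>i<t. w i * w i)"
proof -
  have "(\<Sum>i<t. \<Sum>j<t. w i * w j * (k (xs i) (xs j) + (if i = j then s else 0)))
     = (\<Sum>i<t. (\<Sum>j<t. w i * w j * k (xs i) (xs j)) + (\<Sum>j<t. (w i * w j) * (if i = j then s else 0)))"
    by (simp add: sum.distrib distrib_left)
  also have "\<dots> = (\<Sum>i<t. (\<Sum>j<t. w i * w j * k (xs i) (xs j)) + (w i * w i) * s)"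
    by (intro sum.cong refl) (subst delta_aux[where f="\<lambda>j. w _ * w j"], auto)
  finally show ?thesis by (simp add: sum.distrib sum_distrib_left mult_ac)
qed

lemma psd_g_nonneg:
  fixes t :: nat and xs :: "nat \<Rightarrow> 'x" and w :: "nat \<Rightarrow> real"
  assumes psd: "psd_kernel k" and s2: "s2 > 0"
  shows "(\<Sum>i<t. \<Sum>j<t. w i * w j * (k (xs i) (xs j) + (if i = j then s2 else 0)))
     \<ge> s2 * (\<Sum>i<t. w i * w i)"
proof -
  have "0 \<le> (\<Sum>i<t. \<Sum>j<t. w i * w j * k (xs i) (xs j))" using psd unfolding psd_kernel_def
    by (auto dest!: spec[where x=t] spec[where x=xs] spec[where x=w])
  thus ?thesis using psd_g[where t=t and w=w and xs=xs and k=k and s=s2] by linarith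
qed

lemma post_var_bound:
  assumes psd: "psd_kernel k" and s2: "s2 > 0"
  shows "post_var k s2 xs t x \<le> k x x - 2*(\<Sum>i<t. c i * k x (xs i))
     + (\<Sum>i<t. \<Sum>j<t. c i * c j * (k (xs i) (xs j) + (if i = j then s2 else 0)))"
proof -
  define g where "g i j = k (xs i) (xs j) + (if i = j then s2 else 0)" for i j
  define G where "G = gram_mat k xs t + s2 \<cdot>\<^sub>m 1\<^sub>m t"
  define kv where "kv = kern_vec k xs t x"
  have sym: "\<And>a b. k a b = k b a" using psd unfolding psd_kernel_def by auto
  have Gc: "G \<in> carrier_mat t t" unfolding G_def gram_mat_def by auto
  have Gij: "\<And>i j. i < t \<Longrightarrow> j < t \<Longrightarrow> G $$ (i,j) = g i j"
    unfolding G_def gram_mat_def g_def by auto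
  have kvc: "kv \<in> carrier_vec t" unfolding kv_def kern_vec_def by auto
  have Gv: "\<And>v i. v \<in> carrier_vec t \<Longrightarrow> i < t \<Longrightarrow> (G *\<^sub>v v) $ i = (\<Sum>j<t. g i j * v $ j)"
    using Gc Gij by (auto simp: scalar_prod_def atLeast0LessThan intro!: sum.cong)
  have quad: "\<And>v. v \<in> carrier_vec t \<Longrightarrow> scalar_prod v (G *\<^sub>v v) = (\<Sum>i<t. \<Sum>j<t. v$i * v$j * g i j)"
  proof -
    fix v :: "real vec" assume v: "v \<in> carrier_vec t"
    have "scalar_prod v (G *\<^sub>v v) = (\<Sum>i<t. v $ i * (G *\<^sub>v v) $ i)"
      using Gc by (simp add: scalar_prod_def atLeast0LessThan)
    also have "\<dots> = (\<Sum>i<t. \<Sum>j<t. v$i * v$j * g i j)"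
      using Gv[OF v] by (simp add: sum_distrib_left mult_ac)
    finally show "scalar_prod v (G *\<^sub>v v) = (\<Sum>i<t. \<Sum>j<t. v$i * v$j * g i j)" .
  qed
  have det: "det G \<noteq> 0"
  proof
    assume "det G = 0"
    then obtain v where v: "v \<in> carrier_vec t" "v \<noteq> 0\<^sub>v t" "G *\<^sub>v v = 0\<^sub>v t"
      using det_0_iff_vec_prod_zero_field[OF Gc] by auto
    have "0 = scalar_prod v (G *\<^sub>v v)" using v by simp
    also have "\<dots> \<ge> s2 * (\<Sum>i<t. v$i * v$i)"
      unfolding quad[OF v(1)] g_def using psd_g_nonneg[OF psd s2, where t=t and w="\<lambda>i. v$i" and xs=xs] by simp
    finally have "(\<Sum>i<t. v$i * v$i) \<le> 0" using s2
      by (simp add: mult_le_0_iff)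
    moreover have "\<And>i. i < t \<Longrightarrow> 0 \<le> v$i * v$i" by simp
    moreover have "(\<Sum>i<t. v$i * v$i) \<ge> 0" by (intro sum_nonneg) auto
    ultimately have "(\<Sum>i<t. v$i * v$i) = 0" by linarith
    hence "\<forall>i\<in>{..<t}. v$i * v$i = 0"
      using sum_nonneg_eq_0_iff[of "{..<t}" "\<lambda>i. v$i * v$i"] by simp
    hence "v = 0\<^sub>v t" using v(1) by (intro eq_vecI) auto
    with v(2) show False by simp
  qed
  obtain Binv where Bi: "mat_inverse G = Some Binv"
  proof (cases "mat_inverse G")
    case None
    thus ?thesis using mat_inverse(1)[OF Gc, where b="()"] det_non_zero_imp_unit[OF Gc det, where b="()"] by blast
  qed auto
  from mat_inverse(2)[OF Gc Bi] have GB: "G * Binv = 1\<^sub>m t" and Bc: "Binv \<in> carrier_mat t t" by auto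
  define u where "u = Binv *\<^sub>v kv"
  have uc: "u \<in> carrier_vec t" unfolding u_def using Bc kvc by auto
  have Gu: "G *\<^sub>v u = kv"
    unfolding u_def using Gc Bc kvc GB by (simp add: assoc_mult_mat_vec[symmetric])
  have pv: "post_var k s2 xs t x = k x x - (\<Sum>i<t. k x (xs i) * u $ i)"
  proof -
    have "post_var k s2 xs t x = k x x - scalar_prod kv u"
      unfolding post_var_def G_def[symmetric] kv_def[symmetric] Bi u_def by simp
    also have "scalar_prod kv u = (\<Sum>i<t. k x (xs i) * u $ i)"
      using uc by (simp add: scalar_prod_def atLeast0LessThan kv_def kern_vec_def)
    finally show ?thesis .
  qed
  have sol: "\<And>i. i < t \<Longrightarrow> (\<Sum>j<t. g i j * u $ j) = k x (xs i)"
  proof -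
    fix i assume i: "i < t"
    have "(\<Sum>j<t. g i j * u $ j) = (G *\<^sub>v u) $ i" using Gv[OF uc i] by simp
    also have "\<dots> = k x (xs i)" using Gu i by (simp add: kv_def kern_vec_def)
    finally show "(\<Sum>j<t. g i j * u $ j) = k x (xs i)" .
  qed
  have gsym: "\<And>i j. g i j = g j i" unfolding g_def using sym by auto
  have gpsd: "\<And>w. (\<Sum>i<t. \<Sum>j<t. w i * w j * g i j) \<ge> 0"
  proof -
    fix w :: "nat \<Rightarrow> real"
    have "(\<Sum>i<t. w i * w i) \<ge> 0" by (intro sum_nonneg) simp
    hence "s2 * (\<Sum>i<t. w i * w i) \<ge> 0" using s2 by simp
    thus "(\<Sum>i<t. \<Sum>j<t. w i * w j * g i j) \<ge> 0"
      using psd_g_nonneg[OF psd s2, where t=t and w=w and xs=xs] unfolding g_def by linarith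
  qed
  from quad_ineq[OF gsym gpsd sol, of c] show ?thesis unfolding pv g_def by simp
qed




lemma post_var_le_kxx:
  assumes psd: "psd_kernel k" and s2: "s2 > 0"
  shows "post_var k s2 xs t x \<le> k x x"
  using post_var_bound[OF psd s2, where c="\<lambda>_. 0" and xs=xs and t=t and x=x] by simp

lemma post_var_le_count:
  fixes xs :: "nat \<Rightarrow> 'x" and t :: nat
  assumes psd: "psd_kernel k" and s2: "s2 > 0"
    and n: "n = (\<Sum>i<t. if xs i = x then 1 else 0)" and npos: "n > 0"
  shows "post_var k s2 xs t x \<le> s2 / n"
proof -
  define e where "e i = (if xs i = x then 1 else (0::real))" for i
  define c where "c i = e i / n" for i
  have ne: "n = (\<Sum>i<t. e i)" unfolding n e_def by simp
  have h1: "(\<Sum>i<t. c i * k x (xs i)) = k x x"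
  proof -
    have "(\<Sum>i<t. c i * k x (xs i)) = (\<Sum>i<t. (k x x / n) * e i)"
      by (intro sum.cong refl) (simp add: c_def e_def)
    also have "\<dots> = k x x / n * (\<Sum>i<t. e i)" by (rule sum_distrib_left[symmetric])
    also have "\<dots> = k x x / n * n" by (simp only: ne[symmetric])
    finally show ?thesis using npos by simp
  qed
  have h2: "(\<Sum>i<t. \<Sum>j<t. c i * c j * k (xs i) (xs j)) = k x x"
  proof -
    have "(\<Sum>i<t. \<Sum>j<t. c i * c j * k (xs i) (xs j)) = (\<Sum>i<t. \<Sum>j<t. (k x x / n^2) * (e i * e j))"
      by (intro sum.cong refl) (simp add: c_def e_def power2_eq_square)
    also have "\<dots> = (k x x / n^2) * ((\<Sum>i<t. e i) * (\<Sum>j<t. e j))"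
      by (simp only: sum_distrib_left[symmetric] sum_product)
    also have "\<dots> = k x x / n^2 * (n * n)" by (simp only: ne[symmetric])
    also have "\<dots> = k x x" using npos by (simp add: power2_eq_square)
    finally show ?thesis .
  qed
  have h3: "(\<Sum>i<t. c i * c i) = 1 / n"
  proof -
    have "(\<Sum>i<t. c i * c i) = (\<Sum>i<t. (1 / n^2) * e i)"
      by (intro sum.cong refl) (simp add: c_def e_def power2_eq_square)
    also have "\<dots> = 1 / n^2 * (\<Sum>i<t. e i)" by (rule sum_distrib_left[symmetric])
    also have "\<dots> = 1 / n^2 * n" by (simp only: ne[symmetric])
    also have "\<dots> = 1 / n" using npos by (simp add: power2_eq_square)
    finally show ?thesis .
  qed
  have "post_var k s2 xs t x \<le> k x x - 2*(\<Sum>i<t. c i * k x (xs i))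
     + (\<Sum>i<t. \<Sum>j<t. c i * c j * (k (xs i) (xs j) + (if i = j then s2 else 0)))"
    by (rule post_var_bound[OF psd s2])
  also have "\<dots> = s2 / n" unfolding psd_g h1 h2 h3 by simp
  finally show ?thesis .
qed




fun Vs :: "real \<Rightarrow> (nat \<Rightarrow> 'w \<Rightarrow> real) \<Rightarrow> nat \<Rightarrow> 'w \<Rightarrow> real" where
  "Vs C f 0 w = 1"
| "Vs C f (Suc n) w = (if C \<le> Vs C f n w then Vs C f n w else Vs C f n w * f n w)"

locale gp_setup = prob_space M for M :: "'w measure" +
  fixes F :: "nat \<Rightarrow> 'w measure" and SX :: "'x measure" and X :: "nat \<Rightarrow> 'w \<Rightarrow> 'x" and x :: 'x
  assumes subF: "\<And>n. sigma_finite_subalgebra M (F n)"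
    and monoF: "\<And>n m. n \<le> m \<Longrightarrow> sets (F n) \<subseteq> sets (F m)"
    and Xmeas: "\<And>t. t \<ge> 1 \<Longrightarrow> X t \<in> measurable (F t) SX"
    and xset: "{x} \<in> sets SX"
begin

definition J :: "nat \<Rightarrow> 'w \<Rightarrow> real" where
  "J i = indicator {v \<in> space M. X (Suc i) v = x}"
definition p :: "nat \<Rightarrow> 'w \<Rightarrow> real" where
  "p i = real_cond_exp M (F i) (J i)"
definition r :: "nat \<Rightarrow> 'w \<Rightarrow> real" where
  "r i w = max 0 (min 1 (p i w))"

lemma spaceF: "space (F n) = space M"
  using sigma_finite_subalgebra.subalg[OF subF] unfolding subalgebra_def by auto

lemma subalgF: "subalgebra M (F n)"
  using sigma_finite_subalgebra.subalg[OF subF] by auto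

lemma meas_mono: "f \<in> borel_measurable (F m) \<Longrightarrow> m \<le> n \<Longrightarrow> f \<in> borel_measurable (F n)"
  by (rule measurable_from_subalg[of "F n" "F m"]) (auto simp: subalgebra_def spaceF monoF)

lemma meas_M: "f \<in> borel_measurable (F m) \<Longrightarrow> f \<in> borel_measurable M"
  by (rule measurable_from_subalg[OF subalgF])

lemma J_meas: "J i \<in> borel_measurable (F (Suc i))"
proof -
  have "{v \<in> space M. X (Suc i) v = x} = X (Suc i) -` {x} \<inter> space (F (Suc i))"
    by (auto simp: spaceF)
  also have "\<dots> \<in> sets (F (Suc i))" using Xmeas[of "Suc i"] xset by (auto intro: measurable_sets)
  finally show ?thesis unfolding J_def by (rule borel_measurable_indicator)
qed

lemma J_measM[measurable]: "J i \<in> borel_measurable M"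
  using meas_M[OF J_meas] .

lemma J_range: "J i w = 0 \<or> J i w = 1"
  unfolding J_def by (auto simp: indicator_def)

lemma J_bounds: "0 \<le> J i w" "J i w \<le> 1"
  using J_range[of i w] by auto

lemma r_meas: "r i \<in> borel_measurable (F i)"
  unfolding r_def p_def by measurable

lemma r_measM[measurable]: "r i \<in> borel_measurable M"
  using meas_M[OF r_meas] .

lemma r_bounds: "0 \<le> r i w" "r i w \<le> 1"
  unfolding r_def by auto

lemma J_int: "integrable M (J i)"
  by (rule integrable_const_bound[where B=1]) (auto simp: J_bounds abs_le_iff intro: order.trans[OF _ J_bounds(2)])

lemma p_eq_r: "AE w in M. p i w = r i w"
proof -
  interpret S: sigma_finite_subalgebra M "F i" by (rule subF)
  have "AE w in M. p i w \<ge> 0" unfolding p_def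
    by (rule S.real_cond_exp_ge_c[OF J_int]) (auto simp: J_bounds)
  moreover have "AE w in M. p i w \<le> 1" unfolding p_def
    by (rule S.real_cond_exp_le_c[OF J_int]) (auto simp: J_bounds)
  ultimately show ?thesis by eventually_elim (auto simp: r_def)
qed

lemma key:
  assumes hm: "h \<in> borel_measurable (F i)" and hb: "\<And>w. \<bar>h w\<bar> \<le> K"
  shows "(\<integral>w. h w * J i w \<partial>M) = (\<integral>w. h w * r i w \<partial>M)"
proof -
  interpret S: sigma_finite_subalgebra M "F i" by (rule subF)
  have hM[measurable]: "h \<in> borel_measurable M" using meas_M[OF hm] .
  have int: "integrable M (\<lambda>w. h w * J i w)"
  proof (rule integrable_const_bound[where B=K])
    show "AE w in M. norm (h w * J i w) \<le> K"
    proof (intro AE_I2)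
      fix w
      have "\<bar>h w * J i w\<bar> = \<bar>h w\<bar> * J i w" using J_bounds[of i w] by (simp add: abs_mult)
      also have "\<dots> \<le> \<bar>h w\<bar> * 1" using J_bounds[of i w] by (intro mult_left_mono) auto
      finally show "norm (h w * J i w) \<le> K" using hb[of w] by simp
    qed
  qed measurable
  have "(\<integral>w. h w * J i w \<partial>M) = (\<integral>w. h w * p i w \<partial>M)"
    unfolding p_def using S.real_cond_exp_intg(2)[OF int hm J_measM] by simp
  also have "\<dots> = (\<integral>w. h w * r i w \<partial>M)"
    by (rule integral_cong_AE) (auto simp: p_def intro!: eventually_mono[OF p_eq_r])
  finally show ?thesis .
qed

end



context gp_setup begin

definition fac :: "real \<Rightarrow> nat \<Rightarrow> 'w \<Rightarrow> real" where
  "fac c i w = (1 - c * J i w) * exp (c * r i w)"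

lemma fac_meas: "fac c i \<in> borel_measurable (F (Suc i))"
proof -
  have [measurable]: "J i \<in> borel_measurable (F (Suc i))" by (rule J_meas)
  have [measurable]: "r i \<in> borel_measurable (F (Suc i))" by (rule meas_mono[OF r_meas]) auto
  show ?thesis unfolding fac_def by measurable
qed

lemma fac_bounds:
  assumes "0 < c" "c < 1"
  shows "0 \<le> fac c i w" "fac c i w \<le> exp c"
proof -
  have a: "0 \<le> 1 - c * J i w" "1 - c * J i w \<le> 1"
    using J_bounds[of i w] assms by (auto intro: mult_le_one order.trans[of _ c] simp: mult_nonneg_nonneg)
  have b: "exp (c * r i w) \<le> exp c" using r_bounds[of i w] assms by (auto intro: mult_le_one order.trans[of _ c]
     simp: mult_left_le)
  show "0 \<le> fac c i w" unfolding fac_def using a by simp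
  have "(1 - c * J i w) * exp (c * r i w) \<le> 1 * exp c"
    by (rule mult_mono) (use a b in auto)
  thus "fac c i w \<le> exp c" unfolding fac_def by simp
qed

lemma V_meas: "Vs C (fac c) n \<in> borel_measurable (F n)"
proof (induction n)
  case 0 then show ?case by simp
next
  case (Suc n)
  have [measurable]: "Vs C (fac c) n \<in> borel_measurable (F (Suc n))" by (rule meas_mono[OF Suc.IH]) auto
  have [measurable]: "fac c n \<in> borel_measurable (F (Suc n))" by (rule fac_meas)
  have "Vs C (fac c) (Suc n) = (\<lambda>w. if C \<le> Vs C (fac c) n w then Vs C (fac c) n w else Vs C (fac c) n w * fac c n w)"
    by (rule ext) simp
  also have "\<dots> \<in> borel_measurable (F (Suc n))" by measurable
  finally show ?case .
qed

lemma V_measM[measurable]: "Vs C (fac c) n \<in> borel_measurable M"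
  by (rule meas_M[OF V_meas])

lemma V_bounds:
  assumes "0 < c" "c < 1"
  shows "0 \<le> Vs C (fac c) n w \<and> Vs C (fac c) n w \<le> exp c ^ n"
proof (induction n)
  case 0 then show ?case by simp
next
  case (Suc n)
  have f: "0 \<le> fac c n w" "fac c n w \<le> exp c" using fac_bounds[OF assms] by auto
  have "Vs C (fac c) n w * fac c n w \<le> exp c ^ n * exp c"
    using Suc f by (intro mult_mono) auto
  moreover have e: "exp c ^ n \<le> exp c * exp c ^ n" using assms by simp
  ultimately show ?case
  proof (cases "C \<le> Vs C (fac c) n w")
    case True
    have "Vs C (fac c) n w \<le> exp c ^ n" using Suc.IH by simp
    hence "Vs C (fac c) n w \<le> exp c * exp c ^ n" using e by linarith
    thus ?thesis using True Suc.IH by simp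
  next
    case False thus ?thesis using Suc f \<open>Vs C (fac c) n w * fac c n w \<le> exp c ^ n * exp c\<close>
      by (simp add: mult.commute)
  qed
qed

lemma V_stay: "C \<le> Vs C f n w \<Longrightarrow> n \<le> m \<Longrightarrow> C \<le> Vs C f m w"
proof (induction m)
  case 0 then show ?case by simp
next
  case (Suc m) then show ?case by (cases "n = Suc m") (auto simp: le_Suc_eq)
qed

lemma V_inv: "C \<le> Vs C f n w \<or> Vs C f n w = (\<Prod>i<n. f i w)"
  by (induction n) auto

lemma V_hit: "t \<le> n \<Longrightarrow> C \<le> (\<Prod>i<t. f i w) \<Longrightarrow> C \<le> Vs C f n w"
  using V_inv[of C f t w] V_stay[of C f t w n] by auto

lemma V_int_le:
  assumes c: "0 < c" "c < 1"
  shows "(\<integral>w. Vs C (fac c) n w \<partial>M) \<le> 1"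
proof (induction n)
  case 0 then show ?case by simp
next
  case (Suc n)
  define V where "V = Vs C (fac c) n"
  define a where "a w = (if C \<le> V w then V w else 0)" for w
  define h where "h w = (if C \<le> V w then 0 else V w * exp (c * r n w))" for w
  define E where "E = exp c"
  have Vm[measurable]: "V \<in> borel_measurable (F n)" unfolding V_def by (rule V_meas)
  have [measurable]: "V \<in> borel_measurable M" unfolding V_def by simp
  have [measurable]: "r n \<in> borel_measurable (F n)" by (rule r_meas)
  have hm[measurable]: "h \<in> borel_measurable (F n)" unfolding h_def by measurable
  have [measurable]: "h \<in> borel_measurable M" using meas_M[OF hm] .
  have [measurable]: "a \<in> borel_measurable M" unfolding a_def by measurable
  have Vb: "\<And>w. 0 \<le> V w \<and> V w \<le> E ^ n" unfolding V_def E_def using V_bounds[OF c] by auto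
  have er: "\<And>w. 0 < exp (c * r n w) \<and> exp (c * r n w) \<le> E"
    unfolding E_def using r_bounds[of n] c by (auto simp: mult_left_le)
  have Epos: "0 < E" unfolding E_def by simp
  have hb: "\<And>w. \<bar>h w\<bar> \<le> E ^ n * E"
  proof -
    fix w
    have "V w * exp (c * r n w) \<le> E ^ n * E"
      using Vb[of w] er[of w] by (intro mult_mono) auto
    moreover have "0 \<le> V w * exp (c * r n w)" using Vb[of w] er[of w] by simp
    moreover have "0 \<le> E ^ n * E" using Epos by simp
    ultimately show "\<bar>h w\<bar> \<le> E ^ n * E" unfolding h_def by auto
  qed
  have hb0: "\<And>w. 0 \<le> h w" unfolding h_def using Vb er by (auto intro: mult_nonneg_nonneg less_imp_le)
  have ab: "\<And>w. \<bar>a w\<bar> \<le> E ^ n" unfolding a_def using Vb Epos by auto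
  have intb: "\<And>(f::'w \<Rightarrow> real) B. f \<in> borel_measurable M \<Longrightarrow> (\<And>w. \<bar>f w\<bar> \<le> B) \<Longrightarrow> integrable M f"
  proof -
    fix f :: "'w \<Rightarrow> real" and B assume fm: "f \<in> borel_measurable M" and fb: "\<And>w. \<bar>f w\<bar> \<le> B"
    show "integrable M f" by (rule integrable_const_bound[where B=B]) (use fm fb in auto)
  qed
  have ia: "integrable M a" by (rule intb[OF _ ab]) simp
  have ih: "integrable M h" by (rule intb[OF _ hb]) simp
  have ihJ: "integrable M (\<lambda>w. h w * J n w)"
    by (rule intb[of _ "E^n*E"]) (use hb J_bounds in \<open>auto simp: abs_mult intro: order.trans[OF mult_left_le]\<close>)
  have ihr: "integrable M (\<lambda>w. h w * r n w)"
    by (rule intb[of _ "E^n*E"]) (use hb r_bounds in \<open>auto simp: abs_mult intro: order.trans[OF mult_left_le]\<close>)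
  have eqV: "\<And>w. Vs C (fac c) (Suc n) w = a w + (h w - c * (h w * J n w))"
    by (simp add: V_def[symmetric] a_def h_def fac_def algebra_simps)
  have "(\<integral>w. Vs C (fac c) (Suc n) w \<partial>M) = (\<integral>w. a w + (h w - c * (h w * J n w)) \<partial>M)"
    by (rule arg_cong[where f="integral\<^sup>L M"]) (rule ext, rule eqV)
  also have "\<dots> = (\<integral>w. a w \<partial>M) + ((\<integral>w. h w \<partial>M) - c * (\<integral>w. h w * J n w \<partial>M))"
    using ia ih ihJ by simp
  also have "\<dots> = (\<integral>w. a w \<partial>M) + ((\<integral>w. h w \<partial>M) - c * (\<integral>w. h w * r n w \<partial>M))"
    using key[OF hm hb] by simp
  also have "\<dots> = (\<integral>w. a w + (h w - c * (h w * r n w)) \<partial>M)"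
    using ia ih ihr by simp
  also have "\<dots> \<le> (\<integral>w. V w \<partial>M)"
  proof (rule integral_mono)
    show "integrable M (\<lambda>w. a w + (h w - c * (h w * r n w)))" using ia ih ihr by simp
    show "integrable M V" by (rule intb[of _ "E^n"]) (use Vb in auto)
    fix w
    have "exp (c * r n w) * (1 - c * r n w) \<le> 1"
    proof -
      have "1 + (- (c * r n w)) \<le> exp (- (c * r n w))" by (rule exp_ge_add_one_self)
      hence "exp (c * r n w) * (1 - c * r n w) \<le> exp (c * r n w) * exp (- (c * r n w))"
        by (intro mult_left_mono) auto
      thus ?thesis by (simp add: exp_minus)
    qed
    hence "V w * (exp (c * r n w) * (1 - c * r n w)) \<le> V w * 1"
      using Vb[of w] by (intro mult_left_mono) auto
    thus "a w + (h w - c * (h w * r n w)) \<le> V w"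
      unfolding a_def h_def by (auto simp: algebra_simps)
  qed
  also have "\<dots> \<le> 1" using Suc.IH unfolding V_def .
  finally show ?case .
qed

end



context gp_setup begin

lemma prob_V:
  assumes c: "0 < c" "c < 1" and C: "0 < C"
  shows "prob {w \<in> space M. C \<le> Vs C (fac c) n w} \<le> 1 / C"
proof -
  define S where "S = {w \<in> space M. C \<le> Vs C (fac c) n w}"
  have Ss[measurable]: "S \<in> sets M" unfolding S_def by measurable
  have iV: "integrable M (Vs C (fac c) n)"
    by (rule integrable_const_bound[where B="exp c ^ n"]) (use V_bounds[OF c] in auto)
  have "C * prob S = (\<integral>w. C * indicator S w \<partial>M)" using Ss by simp
  also have "\<dots> \<le> (\<integral>w. Vs C (fac c) n w \<partial>M)"
  proof (rule integral_mono)
    show "integrable M (\<lambda>w. C * indicator S w)"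
      by (rule integrable_const_bound[where B="\<bar>C\<bar>"]) (auto simp: indicator_def)
    show "integrable M (Vs C (fac c) n)" by (rule iV)
    fix w assume "w \<in> space M"
    thus "C * indicator S w \<le> Vs C (fac c) n w" using V_bounds[OF c, of C n w]
      by (auto simp: S_def indicator_def)
  qed
  also have "\<dots> \<le> 1" by (rule V_int_le[OF c])
  finally have "C * prob S \<le> 1" .
  thus ?thesis unfolding S_def[symmetric] using C by (simp add: field_simps)
qed

lemma prob_U:
  assumes c: "0 < c" "c < 1" and C: "0 < C"
  shows "prob (\<Union>n. {w \<in> space M. C \<le> Vs C (fac c) n w}) \<le> 1 / C"
proof -
  define S where "S n = {w \<in> space M. C \<le> Vs C (fac c) n w}" for n
  have "range S \<subseteq> sets M" unfolding S_def by auto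
  moreover have "incseq S"
  proof (rule incseq_SucI)
    fix n show "S n \<subseteq> S (Suc n)" unfolding S_def using V_stay[of C "fac c" n _ "Suc n"] by auto
  qed
  ultimately have "(\<lambda>n. prob (S n)) \<longlonglongrightarrow> prob (\<Union>n. S n)" by (rule finite_Lim_measure_incseq)
  moreover have "\<And>n. prob (S n) \<le> 1 / C" unfolding S_def by (rule prob_V[OF c C])
  ultimately have "prob (\<Union>n. S n) \<le> 1 / C" by (intro LIMSEQ_le_const2) auto
  thus ?thesis unfolding S_def .
qed

lemma AE_Zbounded:
  assumes c: "0 < c" "c < 1"
  shows "AE w in M. \<exists>C. \<forall>t. (\<Prod>i<t. fac c i w) < C"
proof -
  define U where "U m = (\<Union>n. {w \<in> space M. real (Suc m) \<le> Vs (real (Suc m)) (fac c) n w})" for m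
  define N where "N = (\<Inter>m. U m)"
  have Us: "\<And>m. U m \<in> sets M" unfolding U_def by measurable
  have Ns: "N \<in> sets M" unfolding N_def using Us by auto
  have pU: "\<And>m. prob N \<le> 1 / real (Suc m)"
  proof -
    fix m
    have "prob N \<le> prob (U m)" unfolding N_def by (rule finite_measure_mono) (use Us in auto)
    also have "\<dots> \<le> 1 / real (Suc m)" unfolding U_def by (rule prob_U[OF c]) simp
    finally show "prob N \<le> 1 / real (Suc m)" .
  qed
  have "prob N = 0"
  proof (rule ccontr)
    assume "prob N \<noteq> 0"
    hence "prob N > 0" using measure_nonneg[of M N] by linarith
    then obtain n where n: "n > 0" "inverse (real n) < prob N" using ex_inverse_of_nat_less by blast
    then obtain m where "n = Suc m" using gr0_implies_Suc by blast
    with n pU[of m] show False by (simp add: divide_inverse)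
  qed
  hence "N \<in> null_sets M" using Ns by (simp add: emeasure_eq_measure null_sets_def)
  moreover have "{w \<in> space M. \<not> (\<exists>C. \<forall>t. (\<Prod>i<t. fac c i w) < C)} \<subseteq> N"
  proof
    fix w assume w: "w \<in> {w \<in> space M. \<not> (\<exists>C. \<forall>t. (\<Prod>i<t. fac c i w) < C)}"
    show "w \<in> N" unfolding N_def
    proof (rule InterI)
      fix Um assume "Um \<in> range U"
      then obtain m where Um: "Um = U m" by auto
      from w obtain t where t: "real (Suc m) \<le> (\<Prod>i<t. fac c i w)" by (auto simp: not_less)
      have "real (Suc m) \<le> Vs (real (Suc m)) (fac c) t w" using V_hit[of t t "real (Suc m)" "fac c" w] t by simp
      thus "w \<in> Um" unfolding Um U_def using w by auto
    qed
  qed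
  ultimately show ?thesis by (rule AE_I')
qed

end



lemma ratio_bound:
  fixes B A N sg s2 q :: real
  assumes "N > 0" "B > 0" "B \<le> A" "sg \<le> s2 / N" "s2 \<ge> 0" "A \<le> q * N"
  shows "B * sg \<le> s2 * q"
proof -
  have "B * sg \<le> B * (s2 / N)" using assms by (intro mult_left_mono) auto
  also have "\<dots> \<le> A * (s2 / N)" using assms by (intro mult_right_mono) auto
  also have "\<dots> \<le> (q * N) * (s2 / N)" using assms by (intro mult_right_mono) auto
  also have "\<dots> = s2 * q" using assms by simp
  finally show ?thesis .
qed

lemma lin_ratio:
  fixes A N K :: real and m :: nat
  assumes m: "m \<ge> 1" and lin: "N \<ge> (1 - 1 / (real m + 2)) * A - K"
    and Abig: "A \<ge> \<bar>K\<bar> * (real m + 2) + 1"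
  shows "N > 0 \<and> A \<le> ((real m + 2) / real m) * N"
proof -
  define d where "d = real m + 2"
  have d: "d \<ge> 3" unfolding d_def using m by simp
  have Ab'': "A \<ge> \<bar>K\<bar> * d + 1" using Abig unfolding d_def .
  have "K * d \<le> \<bar>K\<bar> * d" using d by (intro mult_right_mono) auto
  hence Ab': "A \<ge> K * d + 1" using Ab'' by linarith
  have "0 \<le> \<bar>K\<bar> * d" using d by simp
  have "A / d \<ge> (K * d + 1) / d" using Ab' d by (intro divide_right_mono) auto
  also have "(K * d + 1) / d = K + 1 / d" using d by (simp add: field_simps)
  finally have "A / d \<ge> K + 1 / d" .
  hence cA: "A / d \<ge> K" using d by (smt (verit) divide_pos_pos)
  have Apos: "A > 0" using Ab'' \<open>0 \<le> \<bar>K\<bar> * d\<close> by linarith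
  have "N \<ge> (1 - 1/d) * A - A / d" using lin cA unfolding d_def[symmetric] by linarith
  moreover have "(1 - 1/d) * A - A / d = ((d - 2) / d) * A" using d by (simp add: field_simps)
  ultimately have N: "N \<ge> ((d - 2) / d) * A" by linarith
  have dm: "d - 2 = real m" unfolding d_def by simp
  have "((d - 2) / d) * A > 0" using d Apos by simp
  hence Npos: "N > 0" using N by linarith
  have "A = (d / (d - 2)) * (((d - 2) / d) * A)" using d by (simp add: field_simps)
  also have "\<dots> \<le> (d / (d - 2)) * N" using N d by (intro mult_left_mono) auto
  finally show ?thesis using Npos dm unfolding d_def by simp
qed

lemma det_main:
  fixes A N sg B :: "nat \<Rightarrow> real" and kk s2 :: real and T0 :: nat
  assumes Amono: "\<And>t. A t \<le> A (Suc t)"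
    and BA: "\<And>t. t \<ge> T0 \<Longrightarrow> B t \<le> A t"
    and Bpos: "\<And>t. B t > 0"
    and sk: "\<And>t. sg t \<le> kk" and kk: "0 \<le> kk"
    and sn: "\<And>t. N t > 0 \<Longrightarrow> sg t \<le> s2 / N t" and s2: "s2 > 0"
    and lin: "\<And>m::nat. \<exists>K. \<forall>t. N t \<ge> (1 - 1 / (real m + 2)) * A t - K"
  shows "limsup (\<lambda>t. ereal (B t * sg t)) < \<infinity>"
    and "filterlim B at_top sequentially \<Longrightarrow> limsup (\<lambda>t. ereal (B t * sg t)) \<le> ereal s2"
proof -
  have incA: "incseq A" using Amono by (rule incseq_SucI)
  have unb: "eventually (\<lambda>t. B t * sg t \<le> s2 * ((real m + 2) / real m)) sequentially"
    if unbA: "\<forall>R. \<exists>t. A t > R" and m: "m \<ge> 1" for m :: nat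
  proof -
    obtain K where K: "\<And>t. N t \<ge> (1 - 1 / (real m + 2)) * A t - K" using lin[of m] by blast
    obtain t0 where t0: "A t0 > \<bar>K\<bar> * (real m + 2) + 1" using unbA by blast
    show ?thesis
    proof (rule eventually_sequentiallyI[of "max t0 T0"])
      fix t assume t: "max t0 T0 \<le> t"
      have "A t0 \<le> A t" using incA t unfolding incseq_def by auto
      hence Ab: "A t \<ge> \<bar>K\<bar> * (real m + 2) + 1" using t0 by linarith
      from lin_ratio[OF m K Ab] have r: "N t > 0" "A t \<le> ((real m + 2) / real m) * N t" by auto
      show "B t * sg t \<le> s2 * ((real m + 2) / real m)"
        by (rule ratio_bound[OF r(1) Bpos BA sn[OF r(1)] _ r(2)]) (use t s2 in auto)
    qed
  qed
  show "limsup (\<lambda>t. ereal (B t * sg t)) < \<infinity>"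
  proof (cases "\<exists>R. \<forall>t. A t \<le> R")
    case True
    then obtain R where R: "\<And>t. A t \<le> R" by blast
    have "eventually (\<lambda>t. ereal (B t * sg t) \<le> ereal (R * kk)) sequentially"
    proof (rule eventually_sequentiallyI[of T0])
      fix t assume t: "T0 \<le> t"
      have "B t * sg t \<le> B t * kk" using Bpos sk by (intro mult_left_mono) (auto simp: less_imp_le)
      also have "\<dots> \<le> R * kk" using BA[OF t] R[of t] kk by (intro mult_right_mono) auto
      finally show "ereal (B t * sg t) \<le> ereal (R * kk)" by simp
    qed
    hence "limsup (\<lambda>t. ereal (B t * sg t)) \<le> ereal (R * kk)" by (rule Limsup_bounded)
    thus ?thesis by (rule order.strict_trans1) simp
  next
    case False
    hence "\<forall>R. \<exists>t. A t > R" by (auto simp: not_le)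
    from unb[OF this, of 1] have "eventually (\<lambda>t. ereal (B t * sg t) \<le> ereal (s2 * 3)) sequentially"
      by (auto elim: eventually_mono)
    hence "limsup (\<lambda>t. ereal (B t * sg t)) \<le> ereal (s2 * 3)" by (rule Limsup_bounded)
    thus ?thesis by (rule order.strict_trans1) simp
  qed
  assume Blim: "filterlim B at_top sequentially"
  have unbA: "\<forall>R. \<exists>t. A t > R"
  proof
    fix R
    have "eventually (\<lambda>t. B t > R) sequentially" using Blim by (simp add: filterlim_at_top_dense)
    moreover have "eventually (\<lambda>t. t \<ge> T0) sequentially" by (rule eventually_ge_at_top)
    ultimately have "eventually (\<lambda>t. A t > R) sequentially"
      by eventually_elim (use BA in force)
    then obtain t where "A t > R" using eventually_sequentially by auto
    thus "\<exists>t. A t > R" by blast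
  qed
  show "limsup (\<lambda>t. ereal (B t * sg t)) \<le> ereal s2"
  proof (rule ereal_le_epsilon2)
    fix e :: real assume e: "0 < e"
    obtain m :: nat where m: "real m \<ge> 2 * s2 / e + 1" using real_arch_simple by blast
    have "2 * s2 / e > 0" using s2 e by simp
    hence "real m \<ge> 1" using m by linarith
    hence m1: "m \<ge> 1" by simp
    have q1: "s2 * ((real m + 2) / real m) = s2 + 2 * s2 / real m" using m1 by (simp add: field_simps)
    have q2: "2 * s2 / real m \<le> e"
    proof -
      have "2 * s2 / e \<le> real m" using m by linarith
      thus ?thesis using e m1 by (simp add: field_simps)
    qed
    have q: "s2 * ((real m + 2) / real m) \<le> s2 + e" using q1 q2 by linarith
    from unb[OF unbA m1] have "eventually (\<lambda>t. ereal (B t * sg t) \<le> ereal s2 + ereal e) sequentially"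
      by eventually_elim (use q in auto)
    thus "limsup (\<lambda>t. ereal (B t * sg t)) \<le> ereal s2 + ereal e" by (rule Limsup_bounded)
  qed
qed




lemma sum_shift1: "(\<Sum>t=1..T. g t) = (\<Sum>i<T. g (Suc i) :: real)"
  by (induction T) auto

context gp_setup begin

lemma fac_exp:
  assumes c: "0 < c" "c < 1"
  shows "fac c i w = exp (ln (1 - c) * J i w + c * r i w)"
proof (cases "J i w = 0")
  case True thus ?thesis by (simp add: fac_def)
next
  case False hence "J i w = 1" using J_range by blast
  thus ?thesis using c by (simp add: fac_def exp_add)
qed

lemma Z_exp:
  assumes c: "0 < c" "c < 1"
  shows "(\<Prod>i<t. fac c i w) = exp (ln (1 - c) * (\<Sum>i<t. J i w) + c * (\<Sum>i<t. r i w))"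
  by (simp add: fac_exp[OF c] exp_sum[symmetric] sum.distrib sum_distrib_left)

lemma AE_lin:
  assumes c: "0 < c" "c < 1"
  shows "AE w in M. \<exists>K. \<forall>t. (\<Sum>i<t. J i w) \<ge> (1 - c) * (\<Sum>i<t. r i w) - K"
  using AE_Zbounded[OF c]
proof eventually_elim
  fix w assume "\<exists>C. \<forall>t. (\<Prod>i<t. fac c i w) < C"
  then obtain C where C: "\<And>t. (\<Prod>i<t. fac c i w) < C" by blast
  have Cpos: "C > 0" using C[of 0] by simp
  define L where "L = - ln (1 - c)"
  have Lle: "L \<le> c / (1 - c)"
  proof -
    have "ln (1 / (1 - c)) \<le> 1 / (1 - c) - 1" using c by (intro ln_le_minus_one) auto
    moreover have "ln (1 / (1 - c)) = L" unfolding L_def using c by (simp add: ln_div)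
    moreover have "1 / (1 - c) - 1 = c / (1 - c)" using c by (simp add: field_simps)
    ultimately show ?thesis by simp
  qed
  show "\<exists>K. \<forall>t. (\<Sum>i<t. J i w) \<ge> (1 - c) * (\<Sum>i<t. r i w) - K"
  proof (intro exI allI)
    fix t
    define N where "N = (\<Sum>i<t. J i w)"
    define A where "A = (\<Sum>i<t. r i w)"
    have N0: "N \<ge> 0" unfolding N_def using J_bounds by (simp add: sum_nonneg)
    have "exp (ln (1 - c) * N + c * A) < C" using C[of t] Z_exp[OF c] unfolding N_def A_def by simp
    hence "ln (1 - c) * N + c * A < ln C" using Cpos by (metis exp_gt_zero ln_exp ln_less_cancel_iff)
    hence h1: "c * A - L * N < ln C" unfolding L_def by simp
    have "L * N \<le> (c / (1 - c)) * N" using Lle N0 by (intro mult_right_mono) auto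
    hence "c * A - (c / (1 - c)) * N < ln C" using h1 by linarith
    hence "(1 - c) / c * (c * A - (c / (1 - c)) * N) \<le> (1 - c) / c * ln C"
      using c by (intro mult_left_mono) auto
    moreover have "(1 - c) / c * (c * A - (c / (1 - c)) * N) = (1 - c) * A - N"
      using c by (simp add: field_simps)
    ultimately have "(1 - c) * A - N \<le> (1 - c) / c * ln C" by simp
    thus "N \<ge> (1 - c) * A - (1 - c) / c * ln C" by linarith
  qed
qed

end




theorem mainTheorem5:
  fixes M :: "'w measure" and F :: "nat \<Rightarrow> 'w measure"
    and SX :: "'x measure" and X :: "nat \<Rightarrow> 'w \<Rightarrow> 'x"
    and k :: "'x \<Rightarrow> 'x \<Rightarrow> real" and s2 :: real and x :: 'x
    and B :: "nat \<Rightarrow> real" and Tstar :: nat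
  assumes "prob_space M"
    and "\<And>n. sigma_finite_subalgebra M (F n)"
    and "\<And>n m. n \<le> m \<Longrightarrow> sets (F n) \<subseteq> sets (F m)"
    and "\<And>t. t \<ge> 1 \<Longrightarrow> X t \<in> measurable (F t) SX"
    and "{x} \<in> sets SX"
    and "psd_kernel k" and "bounded_kernel k"
    and "s2 > 0"
    and "\<And>T. B T > 0"
    and "AE w in M. \<forall>T\<ge>Tstar.
           (\<Sum>t=1..T. real_cond_exp M (F (t - 1))
                (indicator {v \<in> space M. X t v = x}) w) \<ge> B T"
  shows "(AE w in M. limsup (\<lambda>t. ereal (B t * post_var k s2 (\<lambda>i. X (Suc i) w) t x)) < \<infinity>)
       \<and> (filterlim B at_top sequentially \<longrightarrow>
          (AE w in M. limsup (\<lambda>t. ereal (B t * post_var k s2 (\<lambda>i. X (Suc i) w) t x)) \<le> ereal s2))"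
proof -
  have loc: "gp_setup M F SX X x"
    unfolding gp_setup_def gp_setup_axioms_def using assms(1-5) by blast
  interpret G: gp_setup M F SX X x by (rule loc)
  note psd = assms(6) and s2 = assms(8) and Bpos = assms(9)
  have kk: "0 \<le> k x x"
  proof -
    have ax: "\<forall>(n::nat) (xs::nat \<Rightarrow> 'x) (c::nat \<Rightarrow> real). (\<Sum>i<n. \<Sum>j<n. c i * c j * k (xs i) (xs j)) \<ge> 0"
      using psd unfolding psd_kernel_def by blast
    have "0 \<le> (\<Sum>i<(1::nat). \<Sum>j<(1::nat). (\<lambda>_. 1::real) i * (\<lambda>_. 1) j * k ((\<lambda>_. x) i) ((\<lambda>_. x) j))"
      using spec[OF spec[OF spec[OF ax, of 1], of "\<lambda>_. x"], of "\<lambda>_. 1"] by (simp add: lessThan_Suc)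
    thus ?thesis by simp
  qed
  have ae1: "AE w in M. \<forall>i. G.p i w = G.r i w"
    using G.p_eq_r by (simp add: AE_all_countable)
  have ae2: "AE w in M. \<forall>m::nat. \<exists>K. \<forall>t. (\<Sum>i<t. G.J i w) \<ge> (1 - 1 / (real m + 2)) * (\<Sum>i<t. G.r i w) - K"
    unfolding AE_all_countable
  proof
    fix m :: nat
    show "AE w in M. \<exists>K. \<forall>t. (\<Sum>i<t. G.J i w) \<ge> (1 - 1 / (real m + 2)) * (\<Sum>i<t. G.r i w) - K"
      by (rule G.AE_lin) auto
  qed
  have main: "AE w in M. limsup (\<lambda>t. ereal (B t * post_var k s2 (\<lambda>i. X (Suc i) w) t x)) < \<infinity>
      \<and> (filterlim B at_top sequentially \<longrightarrow>
          limsup (\<lambda>t. ereal (B t * post_var k s2 (\<lambda>i. X (Suc i) w) t x)) \<le> ereal s2)"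
    using ae1 ae2 assms(10) AE_space
  proof eventually_elim
    fix w assume w1: "\<forall>i. G.p i w = G.r i w"
      and w2: "\<forall>m::nat. \<exists>K. \<forall>t. (\<Sum>i<t. G.J i w) \<ge> (1 - 1 / (real m + 2)) * (\<Sum>i<t. G.r i w) - K"
      and w3: "\<forall>T\<ge>Tstar. (\<Sum>t=1..T. real_cond_exp M (F (t - 1))
                (indicator {v \<in> space M. X t v = x}) w) \<ge> B T"
      and w: "w \<in> space M"
    define A where "A t = (\<Sum>i<t. G.r i w)" for t
    define N where "N t = (\<Sum>i<t. G.J i w)" for t
    define sg where "sg t = post_var k s2 (\<lambda>i. X (Suc i) w) t x" for t
    have Jw: "\<And>i. G.J i w = (if X (Suc i) w = x then 1 else 0)"
      using w by (simp add: G.J_def indicator_def)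
    have Amono: "\<And>t. A t \<le> A (Suc t)" unfolding A_def using G.r_bounds by simp
    have BA: "\<And>t. t \<ge> Tstar \<Longrightarrow> B t \<le> A t"
    proof -
      fix t assume t: "t \<ge> Tstar"
      have "B t \<le> (\<Sum>t'=1..t. real_cond_exp M (F (t' - 1)) (indicator {v \<in> space M. X t' v = x}) w)"
        using w3 t by blast
      also have "\<dots> = (\<Sum>i<t. G.p i w)" by (subst sum_shift1) (simp add: G.p_def G.J_def)
      also have "\<dots> = A t" unfolding A_def using w1 by simp
      finally show "B t \<le> A t" .
    qed
    have sk: "\<And>t. sg t \<le> k x x" unfolding sg_def by (rule post_var_le_kxx[OF psd s2])
    have sn: "\<And>t. N t > 0 \<Longrightarrow> sg t \<le> s2 / N t"
      unfolding sg_def by (rule post_var_le_count[OF psd s2]) (auto simp: N_def Jw)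
    have lin: "\<And>m::nat. \<exists>K. \<forall>t. N t \<ge> (1 - 1 / (real m + 2)) * A t - K"
      using w2 unfolding N_def A_def by blast
    from det_main[OF Amono BA Bpos sk kk sn s2 lin]
    show "limsup (\<lambda>t. ereal (B t * post_var k s2 (\<lambda>i. X (Suc i) w) t x)) < \<infinity>
      \<and> (filterlim B at_top sequentially \<longrightarrow>
          limsup (\<lambda>t. ereal (B t * post_var k s2 (\<lambda>i. X (Suc i) w) t x)) \<le> ereal s2)"
      unfolding sg_def by blast
  qed
  show ?thesis
  proof
    show "AE w in M. limsup (\<lambda>t. ereal (B t * post_var k s2 (\<lambda>i. X (Suc i) w) t x)) < \<infinity>"
      using main by eventually_elim auto
    show "filterlim B at_top sequentially \<longrightarrow>
          (AE w in M. limsup (\<lambda>t. ereal (B t * post_var k s2 (\<lambda>i. X (Suc i) w) t x)) \<le> ereal s2)"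
    proof
      assume fl: "filterlim B at_top sequentially"
      from main show "AE w in M. limsup (\<lambda>t. ereal (B t * post_var k s2 (\<lambda>i. X (Suc i) w) t x)) \<le> ereal s2"
        by eventually_elim (use fl in auto)
    qed
  qed
qed


end
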